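(* Let $T\in RB(n)$ have strictly positive edge lengths satisfying (MC), and let $l_{\max}=\max_e l(e)$. Let $i$ be a leaf, and let $e_h,\dots,e_0$ be the edges of the path from the root to $i$, where $e_0$ is the pendant edge at $i$ and $e_h$ is incident with the root. Write $l_j=l(e_j)$, and let $n_j$ be the number of leaves descended from the endpoint of $e_j$ farther from the root. Then for every $1\le j\le h$, $$n_j \;\geq\; 2^{\lceil \sum_{k=0}^{j-1} l_k / l_{\max}\rceil}.$$
   Context: $RB(n)$ is the set of rooted binary phylogenetic trees on leaf set $[n]=\{1,\dots,n\}$: rooted trees in which every non-leaf vertex has out-degree exactly 2 and the leaves are labelled bijectively by $[n]$. (MC) is the condition that the sum of edge lengths from the root to each leaf is the same for all leaves. *)

theory Defs
  imports Complex_Main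
begin

text \<open>Rooted binary phylogenetic trees with edge lengths. An internal vertex has
exactly two children; each child is paired with the length of the edge leading to it.\<close>
datatype ltree = Leaf nat | Node real ltree real ltree

fun leaves :: "ltree \<Rightarrow> nat list" where
  "leaves (Leaf a) = [a]"
| "leaves (Node l1 t1 l2 t2) = leaves t1 @ leaves t2"

fun edge_lengths :: "ltree \<Rightarrow> real list" where
  "edge_lengths (Leaf a) = []"
| "edge_lengths (Node l1 t1 l2 t2) = l1 # l2 # edge_lengths t1 @ edge_lengths t2"

definition RB :: "nat \<Rightarrow> ltree set" where
  "RB n = {T. distinct (leaves T) \<and> set (leaves T) = {1..n}}"

text \<open>Edges on the path from the root to leaf i, listed from the root downwards;
each edge is given as (length, subtree hanging below its lower endpoint).\<close>
fun path_to :: "ltree \<Rightarrow> nat \<Rightarrow> (real \<times> ltree) list" where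
  "path_to (Leaf a) i = []"
| "path_to (Node l1 t1 l2 t2) i =
     (if i \<in> set (leaves t1) then (l1, t1) # path_to t1 i
      else if i \<in> set (leaves t2) then (l2, t2) # path_to t2 i else [])"

definition root_dist :: "ltree \<Rightarrow> nat \<Rightarrow> real" where
  "root_dist T i = (\<Sum>e\<leftarrow>path_to T i. fst e)"

definition MC :: "ltree \<Rightarrow> bool" where
  "MC T \<longleftrightarrow> (\<forall>i\<in>set (leaves T). \<forall>k\<in>set (leaves T). root_dist T i = root_dist T k)"

definition positive_lengths :: "ltree \<Rightarrow> bool" where
  "positive_lengths T \<longleftrightarrow> (\<forall>x\<in>set (edge_lengths T). x > 0)"

definition lmax :: "ltree \<Rightarrow> real" where
  "lmax T = Max (set (edge_lengths T))"

end

theory Submission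
  imports Defs
begin

fun subs :: "ltree \<Rightarrow> ltree set" where
  "subs (Leaf a) = {Leaf a}"
| "subs (Node l1 t1 l2 t2) = insert (Node l1 t1 l2 t2) (subs t1 \<union> subs t2)"

lemma self_subs: "t \<in> subs t"
  by (cases t) auto

lemma leaves_ne: "leaves t \<noteq> []"
  by (induction t) auto

lemma rd_left: "k \<in> set (leaves t1) \<Longrightarrow> root_dist (Node l1 t1 l2 t2) k = l1 + root_dist t1 k"
  by (simp add: root_dist_def)

lemma rd_right: "distinct (leaves (Node l1 t1 l2 t2)) \<Longrightarrow> k \<in> set (leaves t2) \<Longrightarrow>
   root_dist (Node l1 t1 l2 t2) k = l2 + root_dist t2 k"
  by (auto simp add: root_dist_def)

lemma rd_leaf: "root_dist (Leaf a) k = 0"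
  by (simp add: root_dist_def)

lemma subs_props:
  "S \<in> subs T \<Longrightarrow> distinct (leaves T) \<Longrightarrow> MC T \<Longrightarrow>
    distinct (leaves S) \<and> MC S \<and> set (edge_lengths S) \<subseteq> set (edge_lengths T)"
proof (induction T)
  case (Leaf a)
  then show ?case by simp
next
  case (Node l1 t1 l2 t2)
  have d1: "distinct (leaves t1)" and d2: "distinct (leaves t2)" using Node.prems by auto
  have m1: "MC t1"
    unfolding MC_def proof (intro ballI)
    fix a b assume "a \<in> set (leaves t1)" "b \<in> set (leaves t1)"
    then have "root_dist (Node l1 t1 l2 t2) a = root_dist (Node l1 t1 l2 t2) b"
      using Node.prems(3) unfolding MC_def by simp
    then show "root_dist t1 a = root_dist t1 b" using \<open>a \<in> _\<close> \<open>b \<in> _\<close> by (simp add: rd_left)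
  qed
  have m2: "MC t2"
    unfolding MC_def proof (intro ballI)
    fix a b assume "a \<in> set (leaves t2)" "b \<in> set (leaves t2)"
    then have "root_dist (Node l1 t1 l2 t2) a = root_dist (Node l1 t1 l2 t2) b"
      using Node.prems(3) unfolding MC_def by simp
    then show "root_dist t2 a = root_dist t2 b" using \<open>a \<in> _\<close> \<open>b \<in> _\<close> Node.prems(2) by (simp add: rd_right)
  qed
  show ?case
  proof (cases "S = Node l1 t1 l2 t2")
    case True then show ?thesis using Node.prems by auto
  next
    case False
    then have "S \<in> subs t1 \<or> S \<in> subs t2" using Node.prems by auto
    then show ?thesis using Node.IH d1 d2 m1 m2 by fastforce
  qed
qed

lemma path_props:
  "i \<in> set (leaves T) \<Longrightarrow> q < length (path_to T i) \<Longrightarrow>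
   snd (path_to T i ! q) \<in> subs T \<and> i \<in> set (leaves (snd (path_to T i ! q))) \<and>
   path_to (snd (path_to T i ! q)) i = drop (Suc q) (path_to T i)"
proof (induction T arbitrary: q)
  case (Leaf a)
  then show ?case by simp
next
  case (Node l1 t1 l2 t2)
  show ?case
  proof (cases "i \<in> set (leaves t1)")
    case True
    show ?thesis
    proof (cases q)
      case 0 then show ?thesis using True by (simp add: self_subs)
    next
      case (Suc q')
      then show ?thesis using True Node.IH(1)[of q'] Node.prems by auto
    qed
  next
    case False
    then have i2: "i \<in> set (leaves t2)" using Node.prems by auto
    show ?thesis
    proof (cases q)
      case 0 then show ?thesis using False i2 by (simp add: self_subs)
    next
      case (Suc q')
      then show ?thesis using False i2 Node.IH(2)[of q'] Node.prems by auto
    qed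
  qed
qed

lemma count_bound:
  assumes "distinct (leaves S)" "\<forall>x\<in>set (edge_lengths S). x \<le> L" "L > 0"
    "\<forall>k\<in>set (leaves S). root_dist S k = h"
  shows "(2::real) powr real_of_int \<lceil>h / L\<rceil> \<le> real (length (leaves S))"
  using assms
proof (induction S arbitrary: h)
  case (Leaf a)
  then have "h = 0" by (simp add: rd_leaf)
  then show ?case by simp
next
  case (Node l1 t1 l2 t2)
  obtain k1 where k1: "k1 \<in> set (leaves t1)" using leaves_ne by (metis list.set_sel(1))
  obtain k2 where k2: "k2 \<in> set (leaves t2)" using leaves_ne by (metis list.set_sel(1))
  have u1: "\<forall>k\<in>set (leaves t1). root_dist t1 k = h - l1"
  proof
    fix k assume k: "k \<in> set (leaves t1)"
    then have "root_dist (Node l1 t1 l2 t2) k = h" using Node.prems(4) by simp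
    then show "root_dist t1 k = h - l1" using k by (simp add: rd_left)
  qed
  have u2: "\<forall>k\<in>set (leaves t2). root_dist t2 k = h - l2"
  proof
    fix k assume k: "k \<in> set (leaves t2)"
    then have "root_dist (Node l1 t1 l2 t2) k = h" using Node.prems(4) by simp
    then show "root_dist t2 k = h - l2" using k Node.prems(1) by (simp add: rd_right)
  qed
  have I1: "(2::real) powr real_of_int \<lceil>(h - l1) / L\<rceil> \<le> real (length (leaves t1))"
    using Node.IH(1)[OF _ _ _ u1] Node.prems by auto
  have I2: "(2::real) powr real_of_int \<lceil>(h - l2) / L\<rceil> \<le> real (length (leaves t2))"
    using Node.IH(2)[OF _ _ _ u2] Node.prems by auto
  define c where "c = \<lceil>h / L\<rceil>"
  have "l1 \<le> L" "l2 \<le> L" using Node.prems(2) by auto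
  have c1: "c - 1 \<le> \<lceil>(h - l1) / L\<rceil>"
  proof -
    have "(h - L) / L \<le> (h - l1) / L" using \<open>l1 \<le> L\<close> \<open>L > 0\<close> by (simp add: divide_right_mono)
    moreover have "(h - L) / L = h / L - 1" using \<open>L > 0\<close> by (simp add: field_simps)
    ultimately have "\<lceil>h / L - 1\<rceil> \<le> \<lceil>(h - l1) / L\<rceil>" by (metis ceiling_mono)
    then show ?thesis unfolding c_def by simp
  qed
  have c2: "c - 1 \<le> \<lceil>(h - l2) / L\<rceil>"
  proof -
    have "(h - L) / L \<le> (h - l2) / L" using \<open>l2 \<le> L\<close> \<open>L > 0\<close> by (simp add: divide_right_mono)
    moreover have "(h - L) / L = h / L - 1" using \<open>L > 0\<close> by (simp add: field_simps)
    ultimately have "\<lceil>h / L - 1\<rceil> \<le> \<lceil>(h - l2) / L\<rceil>" by (metis ceiling_mono)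
    then show ?thesis unfolding c_def by simp
  qed
  have p1: "(2::real) powr real_of_int (c - 1) \<le> real (length (leaves t1))"
    using I1 c1 by (meson order_trans powr_mono of_int_le_iff one_le_numeral)
  have p2: "(2::real) powr real_of_int (c - 1) \<le> real (length (leaves t2))"
    using I2 c2 by (meson order_trans powr_mono of_int_le_iff one_le_numeral)
  have "(2::real) powr real_of_int c = 2 * 2 powr real_of_int (c - 1)"
  proof -
    have "(2::real) powr real_of_int c = 2 powr (1 + (real_of_int c - 1))" by simp
    also have "\<dots> = 2 * 2 powr (real_of_int c - 1)" by (simp only: powr_add) simp
    finally show ?thesis by simp
  qed
  then show ?case using p1 p2 unfolding c_def by simp
qed

lemma sl_rev: "sum_list (map (f::_\<Rightarrow>real) (rev xs)) = sum_list (map f xs)"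
  by (induction xs) auto

lemma sum_take: "j \<le> length xs \<Longrightarrow> (\<Sum>k<j. f (xs ! k)) = sum_list (map f (take j xs))"
proof (induction j)
  case 0 then show ?case by simp
next
  case (Suc j)
  then show ?case by (simp add: take_Suc_conv_app_nth)
qed

theorem mainTheorem4:
  fixes T :: ltree and n i :: nat
  assumes "T \<in> RB n"
    and "positive_lengths T"
    and "MC T"
    and "i \<in> set (leaves T)"
  defines "p \<equiv> rev (path_to T i)"
  shows "\<forall>j. 1 \<le> j \<and> j < length p \<longrightarrow>
           (2::real) powr real_of_int \<lceil>(\<Sum>k<j. fst (p ! k)) / lmax T\<rceil>
             \<le> real (length (leaves (snd (p ! j))))"
proof (intro allI impI)
  fix j assume j: "1 \<le> j \<and> j < length p"
  define P where "P = path_to T i"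
  define m where "m = length P"
  define q where "q = m - 1 - j"
  have jm: "j < m" using j unfolding p_def P_def m_def by simp
  have qm: "q < m" using jm unfolding q_def by simp
  have dT: "distinct (leaves T)" using assms(1) by (simp add: RB_def)
  obtain S where S: "S = snd (P ! q)" by simp
  have pp: "S \<in> subs T \<and> i \<in> set (leaves S) \<and> path_to S i = drop (Suc q) P"
    using path_props[OF assms(4), of q] qm S unfolding P_def m_def by simp
  have sp: "distinct (leaves S) \<and> MC S \<and> set (edge_lengths S) \<subseteq> set (edge_lengths T)"
    using subs_props pp dT assms(3) by blast
  have pj: "p ! j = P ! q" unfolding p_def P_def q_def m_def using jm
    by (simp add: rev_nth P_def m_def)
  have sumeq: "(\<Sum>k<j. fst (p ! k)) = root_dist S i"
  proof -
    have e1: "(\<Sum>k<j. fst (p ! k)) = sum_list (map fst (take j p))"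
      using jm j unfolding m_def P_def p_def by (intro sum_take) simp
    have e2: "take j p = rev (drop (m - j) P)"
      unfolding p_def P_def m_def by (simp add: take_rev)
    have e3: "m - j = Suc q" using jm unfolding q_def by simp
    have e4: "sum_list (map fst (rev (drop (Suc q) P))) = sum_list (map fst (drop (Suc q) P))"
      by (rule sl_rev)
    have e5: "sum_list (map fst (drop (Suc q) P)) = root_dist S i" using pp by (simp only: root_dist_def)
    show ?thesis using e1 e4 e5 unfolding e2 e3 by simp
  qed
  have ne: "edge_lengths T \<noteq> []"
  proof
    assume "edge_lengths T = []"
    then obtain a where "T = Leaf a" by (cases T) auto
    then show False using jm unfolding m_def P_def by simp
  qed
  define L where "L = lmax T"
  have Lge: "\<forall>x\<in>set (edge_lengths S). x \<le> L"
    using sp unfolding L_def lmax_def by auto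
  have Lpos: "L > 0"
  proof -
    obtain x where x: "x \<in> set (edge_lengths T)" using ne by (metis list.set_sel(1))
    then have "x > 0" using assms(2) by (simp add: positive_lengths_def)
    moreover have "x \<le> L" using x unfolding L_def lmax_def by simp
    ultimately show ?thesis by simp
  qed
  have ult: "\<forall>k\<in>set (leaves S). root_dist S k = root_dist S i"
  proof
    fix k assume k: "k \<in> set (leaves S)"
    have "MC S" using sp by blast
    then show "root_dist S k = root_dist S i" using k pp unfolding MC_def by blast
  qed
  have "(2::real) powr real_of_int \<lceil>root_dist S i / L\<rceil> \<le> real (length (leaves S))"
    using count_bound[OF _ Lge Lpos ult] sp by simp
  then show "(2::real) powr real_of_int \<lceil>(\<Sum>k<j. fst (p ! k)) / lmax T\<rceil>
             \<le> real (length (leaves (snd (p ! j))))"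
    using sumeq pj S unfolding L_def by simp
qed

end
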